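(* Let $f\colon\mathbb{R}^n\to\mathbb{R}$ be $f(x)=x^\top Ax+b^\top x+c$ with $A\in\mathbb{R}^{n\times n}$ symmetric, $b\in\mathbb{R}^n$, $c\in\mathbb{R}$. Let $C\colon[0,\infty)\to\mathbb{R}^{n\times n}$ solve $\dot C(t)=-2C(t)AC(t)$, with $C(0)$ invertible, and let $m(0)\in\mathbb{R}^n$. Then $m\colon[0,\infty)\to\mathbb{R}^n$ given by $$m(t)=C(t)\big(C(0)^{-1}m(0)-tb\big)$$ has initial value $m(0)$ and solves $\dot m(t)=-2C(t)Am(t)-C(t)b$.
   Context: The equations $\dot m=-2CAm-Cb$, $\dot C=-2CAC$ are the approximately Gaussian replicator flow (AGRF) equations for this quadratic $f$, i.e., the ODEs $\dot m_i=m_i\mathbb{E}[f(x)]-\mathbb{E}[x_if(x)]$, $\dot C_{ij}=(C_{ij}-m_im_j)\mathbb{E}[f(x)]-\mathbb{E}[x_ix_jf(x)]+m_i\mathbb{E}[x_jf(x)]+m_j\mathbb{E}[x_if(x)]$ with $x\sim\mathcal{N}(m(t),C(t))$, specialized to quadratic $f$. *)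

theory Defs
  imports "HOL-Analysis.Analysis"
begin

end

theory Submission
  imports Defs
begin

lemma bb_mv: "bounded_bilinear ((*v) :: real^'n^'m \<Rightarrow> real^'n \<Rightarrow> real^'m)"
proof -
  have "bilinear ((*v) :: real^'n^'m \<Rightarrow> real^'n \<Rightarrow> real^'m)"
    unfolding bilinear_def
  proof (intro conjI allI)
    fix x :: "real^'n^'m" show "linear ((*v) x)" by (rule matrix_vector_mul_linear)
  next
    fix y :: "real^'n" show "linear (\<lambda>x::real^'n^'m. x *v y)"
      by (rule linearI) (auto simp: vec_eq_iff matrix_vector_mult_def sum.distrib sum_distrib_left algebra_simps)
  qed
  then show ?thesis by (simp add: bilinear_conv_bounded_bilinear)
qed

theorem proposition4:
  fixes A :: "real^'n^'n" and b :: "real^'n" and c :: real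
    and C :: "real \<Rightarrow> real^'n^'n" and m0 :: "real^'n"
  assumes symA: "transpose A = A"
    and C_ode: "\<forall>t\<ge>0. (C has_vector_derivative (-2 *\<^sub>R (C t ** A ** C t))) (at t within {0..})"
    and C0_inv: "invertible (C 0)"
  defines "m \<equiv> (\<lambda>t. C t *v (matrix_inv (C 0) *v m0 - t *\<^sub>R b))"
  shows "m 0 = m0 \<and>
    (\<forall>t\<ge>0. (m has_vector_derivative (-2 *\<^sub>R ((C t ** A) *v m t) - C t *v b)) (at t within {0..}))"
proof
  show "m 0 = m0" unfolding m_def
    using someI_ex[OF C0_inv[unfolded invertible_def]] unfolding matrix_inv_def[symmetric]
    by (simp add: matrix_vector_mul_assoc)
next
  show "\<forall>t\<ge>0. (m has_vector_derivative (-2 *\<^sub>R ((C t ** A) *v m t) - C t *v b)) (at t within {0..})"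
  proof (intro allI impI)
    fix t :: real assume t: "t \<ge> 0"
    let ?v = "\<lambda>t. matrix_inv (C 0) *v m0 - t *\<^sub>R b"
    have dv: "(?v has_vector_derivative (- b)) (at t within {0..})"
      by (auto intro!: derivative_eq_intros)
    have "(m has_vector_derivative (C t *v (- b) + (-2 *\<^sub>R (C t ** A ** C t)) *v ?v t)) (at t within {0..})"
      unfolding m_def
      by (rule bounded_bilinear.has_vector_derivative[OF bb_mv C_ode[rule_format, OF t] dv])
    moreover have "C t *v (- b) + (-2 *\<^sub>R (C t ** A ** C t)) *v ?v t = -2 *\<^sub>R ((C t ** A) *v m t) - C t *v b"
    proof -
      have n: "C t *v (- b) = - (C t *v b)"
        using matrix_vector_mult_diff_distrib[of "C t" 0 b] by simp
      have "(-2 *\<^sub>R (C t ** A ** C t)) *v ?v t = -2 *\<^sub>R ((C t ** A) *v m t)"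
        unfolding m_def matrix_vector_mul_assoc by (rule scaleR_matrix_vector_assoc[symmetric])
      then show ?thesis using n by simp
    qed
    ultimately show "(m has_vector_derivative (-2 *\<^sub>R ((C t ** A) *v m t) - C t *v b)) (at t within {0..})"
      by simp
  qed
qed

end
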